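(* Let $G$ be a commutative group, $H$ its torsion subgroup, $G'=G/H$, $\varphi:G\to G'$ the natural homomorphism, $U\subset G$ finite and $U'=\varphi(U)$. Let $\vartheta$ be any of the functionals $\alpha,\alpha',\alpha'',\beta,\beta',\beta''$, with $\vartheta(U)$ computed in $G$ and $\vartheta(U')$ in $G'$. Then $\vartheta(U')\ge\vartheta(U)$.
   Context: For a finite set $U$ in a commutative group $K$, with $A,B$ ranging over nonempty finite subsets of $K$: $\alpha(U)=\inf_{A\supset U,B\supset U}\frac{|A+B|}{\sqrt{|A||B|}}$; $\alpha'(U)=\inf_{A\supset U,B\supset U,|A|=|B|}\frac{|A+B|}{|A|}$; $\alpha''(U)=\inf_{A\supset U}\frac{|A+A|}{|A|}$; $\beta(U)=\inf_{A,B}\frac{|A+B+U|}{\sqrt{|A||B|}}$; $\beta'(U)=\inf_{A,B,|A|=|B|}\frac{|A+B+U|}{\sqrt{|A||B|}}$; $\beta''(U)=\inf_A\frac{|A+A+U|}{|A|}$. *)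

theory Defs
  imports "HOL-Algebra.Algebra" Complex_Main
begin

(* Commutative groups are HOL-Algebra structures, written multiplicatively:
   the sumset A+B is the set product A <#>_G B. *)

definition fin_ne :: "('a,'b) monoid_scheme \<Rightarrow> 'a set \<Rightarrow> bool" where
  "fin_ne G A \<longleftrightarrow> A \<subseteq> carrier G \<and> finite A \<and> A \<noteq> {}"

definition torsion_subgroup :: "('a,'b) monoid_scheme \<Rightarrow> 'a set" where
  "torsion_subgroup G = {x \<in> carrier G. \<exists>n::nat. n > 0 \<and> x [^]\<^bsub>G\<^esub> n = \<one>\<^bsub>G\<^esub>}"

definition alpha_fun :: "('a,'b) monoid_scheme \<Rightarrow> 'a set \<Rightarrow> real" where
  "alpha_fun G U = Inf {real (card (A <#>\<^bsub>G\<^esub> B)) / sqrt (real (card A) * real (card B)) | A B.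
      fin_ne G A \<and> fin_ne G B \<and> U \<subseteq> A \<and> U \<subseteq> B}"

definition alpha'_fun :: "('a,'b) monoid_scheme \<Rightarrow> 'a set \<Rightarrow> real" where
  "alpha'_fun G U = Inf {real (card (A <#>\<^bsub>G\<^esub> B)) / real (card A) | A B.
      fin_ne G A \<and> fin_ne G B \<and> U \<subseteq> A \<and> U \<subseteq> B \<and> card A = card B}"

definition alpha''_fun :: "('a,'b) monoid_scheme \<Rightarrow> 'a set \<Rightarrow> real" where
  "alpha''_fun G U = Inf {real (card (A <#>\<^bsub>G\<^esub> A)) / real (card A) | A.
      fin_ne G A \<and> U \<subseteq> A}"

definition beta_fun :: "('a,'b) monoid_scheme \<Rightarrow> 'a set \<Rightarrow> real" where
  "beta_fun G U = Inf {real (card ((A <#>\<^bsub>G\<^esub> B) <#>\<^bsub>G\<^esub> U)) / sqrt (real (card A) * real (card B)) | A B.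
      fin_ne G A \<and> fin_ne G B}"

definition beta'_fun :: "('a,'b) monoid_scheme \<Rightarrow> 'a set \<Rightarrow> real" where
  "beta'_fun G U = Inf {real (card ((A <#>\<^bsub>G\<^esub> B) <#>\<^bsub>G\<^esub> U)) / sqrt (real (card A) * real (card B)) | A B.
      fin_ne G A \<and> fin_ne G B \<and> card A = card B}"

definition beta''_fun :: "('a,'b) monoid_scheme \<Rightarrow> 'a set \<Rightarrow> real" where
  "beta''_fun G U = Inf {real (card ((A <#>\<^bsub>G\<^esub> A) <#>\<^bsub>G\<^esub> U)) / real (card A) | A.
      fin_ne G A}"

end

theory Submission
  imports Defs
begin

lemma set_mult_eq: "A <#>\<^bsub>G\<^esub> B = {a \<otimes>\<^bsub>G\<^esub> b | a b. a \<in> A \<and> b \<in> B}"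
  unfolding set_mult_def by blast

lemma set_mult_finite: "finite A \<Longrightarrow> finite B \<Longrightarrow> finite (A <#>\<^bsub>G\<^esub> B)"
proof -
  assume "finite A" "finite B"
  have "A <#>\<^bsub>G\<^esub> B = (\<lambda>(a,b). a \<otimes>\<^bsub>G\<^esub> b) ` (A \<times> B)"
    unfolding set_mult_eq by auto
  thus ?thesis using \<open>finite A\<close> \<open>finite B\<close> by simp
qed

lemma ratio_sqrt:
  assumes "k > (0::nat)"
  shows "real (k * cc) / sqrt (real (k * aa) * real (k * bb)) = real cc / sqrt (real aa * real bb)"
proof -
  have "sqrt (real (k * aa) * real (k * bb)) = real k * sqrt (real aa * real bb)"
    by (simp add: real_sqrt_mult algebra_simps)
  thus ?thesis using assms by simp
qed

lemma ratio_lin: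
  assumes "k > (0::nat)"
  shows "real (k * cc) / real (k * aa) = real cc / real aa"
  using assms by simp

context comm_group
begin

lemma torsion_sub: "subgroup (torsion_subgroup G) G"
proof (rule subgroupI)
  show "torsion_subgroup G \<subseteq> carrier G" unfolding torsion_subgroup_def by auto
  have "\<one> \<in> torsion_subgroup G" unfolding torsion_subgroup_def
    by (auto intro!: exI[of _ "1::nat"])
  thus "torsion_subgroup G \<noteq> {}" by blast
  fix a assume "a \<in> torsion_subgroup G"
  then obtain n :: nat where "a \<in> carrier G" "n > 0" "a [^] n = \<one>" unfolding torsion_subgroup_def by auto
  thus "inv a \<in> torsion_subgroup G" unfolding torsion_subgroup_def
    by (auto simp: nat_pow_inv intro!: exI[of _ n])
next
  fix a b assume "a \<in> torsion_subgroup G" "b \<in> torsion_subgroup G"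
  then obtain n m :: nat where a: "a \<in> carrier G" "n > 0" "a [^] n = \<one>"
    and b: "b \<in> carrier G" "m > 0" "b [^] m = \<one>" unfolding torsion_subgroup_def by auto
  have "(a \<otimes> b) [^] (n*m) = a [^] (n*m) \<otimes> b [^] (n*m)"
    using a b by (simp add: pow_mult_distrib m_comm)
  also have "\<dots> = \<one>" using a b
    by (metis nat_pow_one nat_pow_pow mult.commute one_closed r_one)
  finally show "a \<otimes> b \<in> torsion_subgroup G" unfolding torsion_subgroup_def
    using a b by (auto intro!: exI[of _ "n*m"])
qed

lemma fin_closure:
  assumes "finite D" "D \<subseteq> torsion_subgroup G"
  shows "\<exists>T. finite T \<and> \<one> \<in> T \<and> T \<subseteq> torsion_subgroup G \<and> D \<subseteq> T \<and> (\<forall>x\<in>T. \<forall>y\<in>T. x \<otimes> y \<in> T)"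
  using assms
proof (induction D rule: finite_induct)
  case empty
  show ?case by (rule exI[of _ "{\<one>}"]) (auto simp: torsion_subgroup_def intro!: exI[of _ 1])
next
  case (insert d D)
  then obtain T where T: "finite T" "\<one> \<in> T" "T \<subseteq> torsion_subgroup G" "D \<subseteq> T"
    "\<forall>x\<in>T. \<forall>y\<in>T. x \<otimes> y \<in> T" by auto
  have dH: "d \<in> torsion_subgroup G" using insert by auto
  then obtain n :: nat where d: "d \<in> carrier G" "n > 0" "d [^] n = \<one>" unfolding torsion_subgroup_def by auto
  have TC: "T \<subseteq> carrier G" using T(3) unfolding torsion_subgroup_def by auto
  define T' where "T' = (\<lambda>(k,t). d [^] k \<otimes> t) ` ({..<n} \<times> T)"
  have powH: "d [^] k \<in> torsion_subgroup G" for k::nat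
  proof (induction k)
    case 0 show ?case using subgroup.one_closed[OF torsion_sub] by simp
  next
    case (Suc k) thus ?case using subgroup.m_closed[OF torsion_sub] dH by simp
  qed
  have red: "d [^] k = d [^] (k mod n)" for k::nat
  proof -
    have "d [^] k = d [^] (n * (k div n) + k mod n)" by (simp only: mult_div_mod_eq)
    also have "\<dots> = (d [^] n) [^] (k div n) \<otimes> d [^] (k mod n)"
      using d(1) by (simp only: nat_pow_mult nat_pow_pow)
    also have "\<dots> = d [^] (k mod n)" using d by simp
    finally show ?thesis .
  qed
  show ?case
  proof (rule exI[of _ T'], intro conjI)
    show "finite T'" unfolding T'_def using T by simp
    show "\<one> \<in> T'" unfolding T'_def using T d
      by (auto intro!: image_eqI[of _ _ "(0, \<one>)"])
    show "T' \<subseteq> torsion_subgroup G" unfolding T'_def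
      using T powH subgroup.m_closed[OF torsion_sub] by auto
    show "insert d D \<subseteq> T'"
    proof
      fix x assume "x \<in> insert d D"
      then consider "x = d" | "x \<in> D" by auto
      thus "x \<in> T'"
      proof cases
        case 1
        show ?thesis
        proof (cases "n = 1")
          case True
          hence "d = \<one>" using d by simp
          thus ?thesis unfolding T'_def 1 using T d
            by (auto intro!: image_eqI[of _ _ "(0, \<one>)"])
        next
          case False
          hence "1 < n" using d by simp
          thus ?thesis unfolding T'_def 1 using T d
            by (auto intro!: image_eqI[of _ _ "(1, \<one>)"])
        qed
      next
        case 2
        thus ?thesis unfolding T'_def using T TC d
          by (auto intro!: image_eqI[of _ _ "(0, x)"])
      qed
    qed
    show "\<forall>x\<in>T'. \<forall>y\<in>T'. x \<otimes> y \<in> T'"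
    proof (intro ballI)
      fix x y assume "x \<in> T'" "y \<in> T'"
      then obtain k j :: nat and t s where x: "x = d [^] k \<otimes> t" "t \<in> T" and y: "y = d [^] j \<otimes> s" "s \<in> T"
        unfolding T'_def by auto
      have tc: "t \<in> carrier G" "s \<in> carrier G" using x y TC by auto
      have "x \<otimes> y = d [^] (k + j) \<otimes> (t \<otimes> s)"
        using x y tc d by (simp add: nat_pow_mult[symmetric] m_ac)
      also have "\<dots> = d [^] ((k + j) mod n) \<otimes> (t \<otimes> s)" using red by simp
      finally show "x \<otimes> y \<in> T'" unfolding T'_def using T x y d
        by (auto intro!: image_eqI[of _ _ "((k+j) mod n, t \<otimes> s)"])
    qed
  qed
qed


lemma coset_t:
  assumes sub: "subgroup H G" and x: "x \<in> carrier G" and t: "t \<in> H"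
  shows "H #> (x \<otimes> t) = H #> x"
proof -
  have tc: "t \<in> carrier G" using subgroup.mem_carrier[OF sub t] .
  have e: "x \<otimes> t = t \<otimes> x" using m_comm[OF x tc] .
  have "t \<otimes> x \<in> H #> x" using rcosI[OF t subgroup.subset[OF sub] x] .
  hence "x \<otimes> t \<in> H #> x" by (simp only: e)
  hence "H #> x = H #> (x \<otimes> t)" using repr_independence[OF _ x sub] by blast
  thus ?thesis by (rule sym)
qed

lemma coset_eq_diff:
  assumes sub: "subgroup H G" and p: "p \<in> carrier G" and q: "q \<in> carrier G" and e: "H #> p = H #> q"
  shows "inv p \<otimes> q \<in> H"
proof -
  have "q \<in> H #> q" using rcos_self[OF q sub] .
  hence "q \<in> H #> p" by (simp only: e)
  hence "q \<otimes> inv p \<in> H" using subgroup.rcos_module_imp[OF sub is_group p] by blast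
  moreover have "q \<otimes> inv p = inv p \<otimes> q" using m_comm[OF q inv_closed[OF p]] .
  ultimately show ?thesis by simp
qed

lemma count_lemma:
  assumes sub: "subgroup H G" and T: "finite T" "T \<subseteq> H" and W: "finite W" "W \<subseteq> carrier G"
   and cond: "\<And>p q. p\<in>W \<Longrightarrow> q\<in>W \<Longrightarrow> H #> p = H #> q \<Longrightarrow> \<exists>t\<in>T. q = p \<otimes> t"
   and closed: "\<And>x y. x\<in>T \<Longrightarrow> y\<in>T \<Longrightarrow> x \<otimes> y \<in> T"
  shows "card (W <#> T) = card T * card ((\<lambda>x. H #> x) ` W)"
proof -
  define rep where "rep c = (SOME p. p \<in> W \<and> H #> p = c)" for c
  have rep: "rep c \<in> W \<and> H #> rep c = c" if "c \<in> (\<lambda>x. H #> x) ` W" for c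
    unfolding rep_def by (rule someI_ex) (use that in auto)
  have TC: "T \<subseteq> carrier G" using T sub subgroup.subset by blast
  have eq: "W <#> T = (\<Union>c\<in>(\<lambda>x. H #> x) ` W. (\<lambda>t. rep c \<otimes> t) ` T)"
  proof
    show "W <#> T \<subseteq> (\<Union>c\<in>(\<lambda>x. H #> x) ` W. (\<lambda>t. rep c \<otimes> t) ` T)"
    proof
      fix x assume "x \<in> W <#> T"
      then obtain w t where x: "x = w \<otimes> t" "w \<in> W" "t \<in> T" unfolding set_mult_eq by blast
      define c where "c = H #> w"
      have c: "c \<in> (\<lambda>x. H #> x) ` W" using x c_def by blast
      hence "rep c \<in> W" "H #> rep c = H #> w" using rep c_def by auto
      then obtain t' where t': "t' \<in> T" "w = rep c \<otimes> t'" using cond x by blast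
      have "x = rep c \<otimes> (t' \<otimes> t)" using x t' TC W \<open>rep c \<in> W\<close>
        by (simp add: m_assoc subsetD)
      moreover have "t' \<otimes> t \<in> T" using closed t' x by blast
      ultimately show "x \<in> (\<Union>c\<in>(\<lambda>x. H #> x) ` W. (\<lambda>t. rep c \<otimes> t) ` T)" using c by blast
    qed
    show "(\<Union>c\<in>(\<lambda>x. H #> x) ` W. (\<lambda>t. rep c \<otimes> t) ` T) \<subseteq> W <#> T"
      unfolding set_mult_eq using rep by blast
  qed
  have card_each: "card ((\<lambda>t. rep c \<otimes> t) ` T) = card T" if "c \<in> (\<lambda>x. H #> x) ` W" for c
  proof (rule card_image)
    have "rep c \<in> carrier G" using rep[OF that] W by blast
    thus "inj_on (\<lambda>t. rep c \<otimes> t) T" unfolding inj_on_def using TC by (meson l_cancel subsetD)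
  qed
  have disj: "(\<lambda>t. rep c1 \<otimes> t) ` T \<inter> (\<lambda>t. rep c2 \<otimes> t) ` T = {}"
    if "c1 \<in> (\<lambda>x. H #> x) ` W" "c2 \<in> (\<lambda>x. H #> x) ` W" "c1 \<noteq> c2" for c1 c2
  proof (rule ccontr)
    assume "(\<lambda>t. rep c1 \<otimes> t) ` T \<inter> (\<lambda>t. rep c2 \<otimes> t) ` T \<noteq> {}"
    then obtain t1 t2 where tt: "t1 \<in> T" "t2 \<in> T" "rep c1 \<otimes> t1 = rep c2 \<otimes> t2" by blast
    have r: "rep c1 \<in> carrier G" "rep c2 \<in> carrier G" "H #> rep c1 = c1" "H #> rep c2 = c2"
      using rep that W by auto
    have "c1 = H #> (rep c1 \<otimes> t1)" using coset_t[OF sub r(1), of t1] tt T r by auto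
    also have "\<dots> = H #> (rep c2 \<otimes> t2)" using tt by simp
    also have "\<dots> = c2" using coset_t[OF sub r(2), of t2] tt T r by auto
    finally show False using that by simp
  qed
  have "card (W <#> T) = (\<Sum>c\<in>(\<lambda>x. H #> x) ` W. card ((\<lambda>t. rep c \<otimes> t) ` T))"
    unfolding eq by (rule card_UN_disjoint) (use W T disj in auto)
  also have "\<dots> = (\<Sum>c\<in>(\<lambda>x. H #> x) ` W. card T)" using card_each by simp
  finally show ?thesis by simp
qed


lemma mult_T1:
  assumes "P1 \<subseteq> carrier G" "Q1 \<subseteq> carrier G" "T \<subseteq> carrier G" "\<one> \<in> T"
    and closed: "\<And>x y. x\<in>T \<Longrightarrow> y\<in>T \<Longrightarrow> x \<otimes> y \<in> T"
  shows "(P1 <#> T) <#> (Q1 <#> T) = (P1 <#> Q1) <#> T"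
proof
  show "(P1 <#> T) <#> (Q1 <#> T) \<subseteq> (P1 <#> Q1) <#> T"
  proof
    fix z assume "z \<in> (P1 <#> T) <#> (Q1 <#> T)"
    then obtain x t y t' where z: "z = (x \<otimes> t) \<otimes> (y \<otimes> t')" "x \<in> P1" "t \<in> T" "y \<in> Q1" "t' \<in> T"
      unfolding set_mult_eq by blast
    have c: "x \<in> carrier G" "y \<in> carrier G" "t \<in> carrier G" "t' \<in> carrier G" using z assms by auto
    have "z = (x \<otimes> y) \<otimes> (t \<otimes> t')" using z c by (simp add: m_ac)
    moreover have "t \<otimes> t' \<in> T" using closed z by blast
    ultimately show "z \<in> (P1 <#> Q1) <#> T" using z unfolding set_mult_eq by blast
  qed
  show "(P1 <#> Q1) <#> T \<subseteq> (P1 <#> T) <#> (Q1 <#> T)"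
  proof
    fix z assume "z \<in> (P1 <#> Q1) <#> T"
    then obtain x t y where z: "z = (x \<otimes> y) \<otimes> t" "x \<in> P1" "t \<in> T" "y \<in> Q1"
      unfolding set_mult_eq by blast
    have c: "x \<in> carrier G" "y \<in> carrier G" "t \<in> carrier G" using z assms by auto
    have "z = (x \<otimes> \<one>) \<otimes> (y \<otimes> t)" using z c by (simp add: m_ac)
    thus "z \<in> (P1 <#> T) <#> (Q1 <#> T)" using z assms(4) unfolding set_mult_eq by blast
  qed
qed

lemma mult_T2:
  assumes "P1 \<subseteq> carrier G" "Q1 \<subseteq> carrier G" "T \<subseteq> carrier G"
  shows "(P1 <#> T) <#> Q1 = (P1 <#> Q1) <#> T"
proof
  show "(P1 <#> T) <#> Q1 \<subseteq> (P1 <#> Q1) <#> T"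
  proof
    fix z assume "z \<in> (P1 <#> T) <#> Q1"
    then obtain x t y where z: "z = (x \<otimes> t) \<otimes> y" "x \<in> P1" "t \<in> T" "y \<in> Q1"
      unfolding set_mult_eq by blast
    have c: "x \<in> carrier G" "y \<in> carrier G" "t \<in> carrier G" using z assms by auto
    have "z = (x \<otimes> y) \<otimes> t" using z c by (simp add: m_ac)
    thus "z \<in> (P1 <#> Q1) <#> T" using z unfolding set_mult_eq by blast
  qed
  show "(P1 <#> Q1) <#> T \<subseteq> (P1 <#> T) <#> Q1"
  proof
    fix z assume "z \<in> (P1 <#> Q1) <#> T"
    then obtain x t y where z: "z = (x \<otimes> y) \<otimes> t" "x \<in> P1" "t \<in> T" "y \<in> Q1"
      unfolding set_mult_eq by blast
    have c: "x \<in> carrier G" "y \<in> carrier G" "t \<in> carrier G" using z assms by auto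
    have "z = (x \<otimes> t) \<otimes> y" using z c by (simp add: m_ac)
    thus "z \<in> (P1 <#> T) <#> Q1" using z unfolding set_mult_eq by blast
  qed
qed

lemma quot_mult: "A' <#>\<^bsub>G Mod H\<^esub> B' = {P1 <#> Q1 | P1 Q1. P1 \<in> A' \<and> Q1 \<in> B'}"
  unfolding set_mult_eq[of "G Mod H" A' B'] by simp

lemma phi_mult:
  assumes nrm: "H \<lhd> G" and "W1 \<subseteq> carrier G" "W2 \<subseteq> carrier G"
  shows "(\<lambda>x. H #> x) ` (W1 <#> W2) = ((\<lambda>x. H #> x) ` W1) <#>\<^bsub>G Mod H\<^esub> ((\<lambda>x. H #> x) ` W2)"
  unfolding quot_mult set_mult_eq[of G W1 W2]
proof (intro equalityI subsetI)
  fix z assume "z \<in> (\<lambda>x. H #> x) ` {a \<otimes> b |a b. a \<in> W1 \<and> b \<in> W2}"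
  then obtain a b where z: "z = H #> (a \<otimes> b)" "a \<in> W1" "b \<in> W2" by blast
  hence "z = (H #> a) <#> (H #> b)" using normal.rcos_sum[OF nrm] assms by auto
  thus "z \<in> {P1 <#> Q1 |P1 Q1. P1 \<in> (\<lambda>x. H #> x) ` W1 \<and> Q1 \<in> (\<lambda>x. H #> x) ` W2}" using z by blast
next
  fix z assume "z \<in> {P1 <#> Q1 |P1 Q1. P1 \<in> (\<lambda>x. H #> x) ` W1 \<and> Q1 \<in> (\<lambda>x. H #> x) ` W2}"
  then obtain a b where z: "z = (H #> a) <#> (H #> b)" "a \<in> W1" "b \<in> W2" by blast
  hence "z = H #> (a \<otimes> b)" using normal.rcos_sum[OF nrm] assms by auto
  thus "z \<in> (\<lambda>x. H #> x) ` {a \<otimes> b |a b. a \<in> W1 \<and> b \<in> W2}" using z by blast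
qed


lemma mult_carrier: "P1 \<subseteq> carrier G \<Longrightarrow> Q1 \<subseteq> carrier G \<Longrightarrow> P1 <#> Q1 \<subseteq> carrier G"
  unfolding set_mult_eq by auto

lemma transfer:
  fixes A' B' :: "'a set set"
  assumes Hdef: "H = torsion_subgroup G" and U: "finite U" "U \<subseteq> carrier G"
    and A'ne: "fin_ne (G Mod H) A'" and B'ne: "fin_ne (G Mod H) B'"
  shows "\<exists>A B (k::nat). k > 0 \<and> fin_ne G A \<and> fin_ne G B \<and> card A = k * card A' \<and> card B = k * card B'
    \<and> card (A <#> B) = k * card (A' <#>\<^bsub>G Mod H\<^esub> B')
    \<and> card ((A <#> B) <#> U) = k * card ((A' <#>\<^bsub>G Mod H\<^esub> B') <#>\<^bsub>G Mod H\<^esub> ((\<lambda>x. H #> x) ` U))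
    \<and> ((\<lambda>x. H #> x) ` U \<subseteq> A' \<longrightarrow> U \<subseteq> A) \<and> ((\<lambda>x. H #> x) ` U \<subseteq> B' \<longrightarrow> U \<subseteq> B)
    \<and> (A' = B' \<longrightarrow> A = B)"
proof -
  have sub: "subgroup H G" using torsion_sub Hdef by simp
  have nrm: "H \<lhd> G" using subgroup_imp_normal[OF sub] .
  have carrQ: "carrier (G Mod H) = rcosets H" by (simp add: FactGroup_def)
  define s where "s Z = (SOME x. x \<in> carrier G \<and> Z = H #> x)" for Z
  have s: "s Z \<in> carrier G \<and> H #> s Z = Z" if "Z \<in> rcosets H" for Z
  proof -
    have "\<exists>x. x \<in> carrier G \<and> Z = H #> x" using that unfolding RCOSETS_def by auto
    then have "s Z \<in> carrier G \<and> Z = H #> s Z" unfolding s_def by (rule someI_ex)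
    thus ?thesis by auto
  qed
  have A': "A' \<subseteq> rcosets H" "finite A'" "A' \<noteq> {}" using A'ne unfolding carrQ fin_ne_def by auto
  have B': "B' \<subseteq> rcosets H" "finite B'" "B' \<noteq> {}" using B'ne unfolding carrQ fin_ne_def by auto
  have lift: "s ` X' \<subseteq> carrier G" "finite (s ` X')" "s ` X' \<noteq> {}" "(\<lambda>x. H #> x) ` (s ` X') = X'"
    if "X' \<subseteq> rcosets H" "finite X'" "X' \<noteq> {}" for X'
  proof -
    show "s ` X' \<subseteq> carrier G" using s that(1) by blast
    show "finite (s ` X')" using that(2) by simp
    show "s ` X' \<noteq> {}" using that(3) by simp
    have "\<forall>Z\<in>X'. H #> s Z = Z" using s that(1) by blast
    hence "(\<lambda>Z. H #> s Z) ` X' = X'" by simp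
    thus "(\<lambda>x. H #> x) ` (s ` X') = X'" by (simp add: image_image)
  qed
  define SA where "SA = s ` A'"
  define SB where "SB = s ` B'"
  have SA: "SA \<subseteq> carrier G" "finite SA" "SA \<noteq> {}" "(\<lambda>x. H #> x) ` SA = A'"
    unfolding SA_def using lift[OF A'] by auto
  have SB: "SB \<subseteq> carrier G" "finite SB" "SB \<noteq> {}" "(\<lambda>x. H #> x) ` SB = B'"
    unfolding SB_def using lift[OF B'] by auto
  define W1 where "W1 = SA <#> SB"
  define W2 where "W2 = W1 <#> U"
  have W1: "W1 \<subseteq> carrier G" "finite W1" unfolding W1_def
    using mult_carrier[OF SA(1) SB(1)] set_mult_finite[OF SA(2) SB(2)] by auto
  have W2: "W2 \<subseteq> carrier G" "finite W2" unfolding W2_def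
    using mult_carrier[OF W1(1) U(2)] set_mult_finite[OF W1(2) U(1)] by auto
  define Wall where "Wall = W1 \<union> W2 \<union> U \<union> SA \<union> SB"
  have Wsub: "W1 \<subseteq> Wall" "W2 \<subseteq> Wall" "U \<subseteq> Wall" "SA \<subseteq> Wall" "SB \<subseteq> Wall"
    unfolding Wall_def by auto
  have Wall: "Wall \<subseteq> carrier G" "finite Wall" unfolding Wall_def
    using W1 W2 U SA SB by (simp_all add: Un_least)
  define D where "D = ((\<lambda>(p,q). inv p \<otimes> q) ` (Wall \<times> Wall)) \<inter> H"
  have D1: "finite D" unfolding D_def using Wall(2) by simp
  have D2: "D \<subseteq> torsion_subgroup G" unfolding D_def Hdef by blast
  have "\<exists>T. finite T \<and> \<one> \<in> T \<and> T \<subseteq> torsion_subgroup G \<and> D \<subseteq> T \<and> (\<forall>x\<in>T. \<forall>y\<in>T. x \<otimes> y \<in> T)"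
    using fin_closure[OF D1 D2] .
  then obtain T where T: "finite T" "\<one> \<in> T" "T \<subseteq> H" "D \<subseteq> T"
    and closedT: "\<forall>x\<in>T. \<forall>y\<in>T. x \<otimes> y \<in> T"
    unfolding Hdef[symmetric] by blast
  have closed: "x \<otimes> y \<in> T" if "x \<in> T" "y \<in> T" for x y using closedT that by blast
  have TC: "T \<subseteq> carrier G" using T(3) subgroup.subset[OF sub] by (rule order_trans)
  have cond: "\<exists>t\<in>T. q = p \<otimes> t" if "p \<in> Wall" "q \<in> Wall" "H #> p = H #> q" for p q
  proof -
    have pq: "p \<in> carrier G" "q \<in> carrier G" using that(1,2) Wall(1) by (simp_all add: subsetD)
    have "inv p \<otimes> q \<in> H" using coset_eq_diff[OF sub pq that(3)] .
    moreover have "inv p \<otimes> q \<in> (\<lambda>(p,q). inv p \<otimes> q) ` (Wall \<times> Wall)"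
      using that(1,2) by (intro image_eqI[of _ _ "(p,q)"]) simp_all
    ultimately have "inv p \<otimes> q \<in> D" unfolding D_def by blast
    hence "inv p \<otimes> q \<in> T" using T(4) by blast
    moreover have "q = p \<otimes> (inv p \<otimes> q)" using pq by (simp add: m_assoc[symmetric])
    ultimately show ?thesis by blast
  qed
  have cnt: "card (W <#> T) = card T * card ((\<lambda>x. H #> x) ` W)" if "W \<subseteq> Wall" for W
  proof (rule count_lemma[OF sub T(1) T(3)])
    show "finite W" using that Wall(2) by (rule finite_subset)
    show "W \<subseteq> carrier G" using that Wall(1) by (rule order_trans)
    show "\<exists>t\<in>T. q = p \<otimes> t" if "p \<in> W" "q \<in> W" "H #> p = H #> q" for p q
      using cond[of p q] that \<open>W \<subseteq> Wall\<close> by blast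
    show "x \<otimes> y \<in> T" if "x \<in> T" "y \<in> T" for x y using closed that by blast
  qed
  define A where "A = SA <#> T"
  define B where "B = SB <#> T"
  have kpos: "card T > 0" using T(1,2) by (auto simp: card_gt_0_iff)
  have cA: "card A = card T * card A'" unfolding A_def using cnt[OF Wsub(4)] SA(4) by simp
  have cB: "card B = card T * card B'" unfolding B_def using cnt[OF Wsub(5)] SB(4) by simp
  have AB: "A <#> B = W1 <#> T" unfolding A_def B_def W1_def
    using mult_T1[OF SA(1) SB(1) TC T(2)] closed by blast
  have ABU: "(A <#> B) <#> U = W2 <#> T" unfolding AB W2_def
    using mult_T2[OF W1(1) U(2) TC] .
  have phiW1: "(\<lambda>x. H #> x) ` W1 = A' <#>\<^bsub>G Mod H\<^esub> B'"
    unfolding W1_def using phi_mult[OF nrm SA(1) SB(1)] SA(4) SB(4) by simp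
  have phiW2: "(\<lambda>x. H #> x) ` W2 = (A' <#>\<^bsub>G Mod H\<^esub> B') <#>\<^bsub>G Mod H\<^esub> ((\<lambda>x. H #> x) ` U)"
    unfolding W2_def using phi_mult[OF nrm W1(1) U(2)] phiW1 by simp
  have cAB: "card (A <#> B) = card T * card (A' <#>\<^bsub>G Mod H\<^esub> B')"
    unfolding AB using cnt[OF Wsub(1)] phiW1 by simp
  have cABU: "card ((A <#> B) <#> U) = card T * card ((A' <#>\<^bsub>G Mod H\<^esub> B') <#>\<^bsub>G Mod H\<^esub> ((\<lambda>x. H #> x) ` U))"
    unfolding ABU using cnt[OF Wsub(2)] phiW2 by simp
  have UA: "U \<subseteq> s ` X' <#> T" if "(\<lambda>x. H #> x) ` U \<subseteq> X'" "s ` X' \<subseteq> Wall" "X' \<subseteq> rcosets H"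
    for X'
  proof
    fix u assume u: "u \<in> U"
    have "H #> u \<in> X'" using u that(1) by blast
    hence p: "s (H #> u) \<in> s ` X'" "H #> s (H #> u) = H #> u" using s that(3) by auto
    have "s (H #> u) \<in> Wall" "u \<in> Wall" using p(1) that(2) u Wsub(3) by blast+
    then obtain t where "t \<in> T" "u = s (H #> u) \<otimes> t" using cond p(2) by blast
    thus "u \<in> s ` X' <#> T" using p unfolding set_mult_eq by blast
  qed
  have uA: "(\<lambda>x. H #> x) ` U \<subseteq> A' \<longrightarrow> U \<subseteq> A"
    using UA[of A'] Wsub(4) A'(1) unfolding A_def SA_def by blast
  have uB: "(\<lambda>x. H #> x) ` U \<subseteq> B' \<longrightarrow> U \<subseteq> B"
    using UA[of B'] Wsub(5) B'(1) unfolding B_def SB_def by blast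
  have eqAB: "A' = B' \<longrightarrow> A = B" unfolding A_def B_def SA_def SB_def by simp
  have neA: "A \<noteq> {}" unfolding A_def set_mult_eq using SA(3) T(2) by blast
  have neB: "B \<noteq> {}" unfolding B_def set_mult_eq using SB(3) T(2) by blast
  have fA: "fin_ne G A" unfolding fin_ne_def
    using mult_carrier[OF SA(1) TC] set_mult_finite[OF SA(2) T(1)] neA unfolding A_def by blast
  have fB: "fin_ne G B" unfolding fin_ne_def
    using mult_carrier[OF SB(1) TC] set_mult_finite[OF SB(2) T(1)] neB unfolding B_def by blast
  show ?thesis
    apply (rule exI[of _ A], rule exI[of _ B], rule exI[of _ "card T"])
    using kpos fA fB cA cB cAB cABU uA uB eqAB by blast
qed


end

lemma inf_le:
  fixes S S' :: "real set"
  assumes "S' \<noteq> {}" "\<And>x. x\<in>S \<Longrightarrow> 0 \<le> x" "\<And>y. y\<in>S' \<Longrightarrow> \<exists>x\<in>S. x \<le> y"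
  shows "Inf S \<le> Inf S'"
proof -
  have "bdd_below S" by (rule bdd_belowI[of _ 0]) (use assms in auto)
  thus ?thesis by (rule cInf_mono[rotated]) (use assms in auto)
qed

theorem mainTheorem18:
  fixes G :: "('a, 'b) monoid_scheme" and U :: "'a set"
  assumes "comm_group G" and "U \<subseteq> carrier G" and "finite U"
  defines "H \<equiv> torsion_subgroup G"
  defines "U' \<equiv> (\<lambda>x. H #>\<^bsub>G\<^esub> x) ` U"
  shows "alpha_fun (G Mod H) U' \<ge> alpha_fun G U \<and>
         alpha'_fun (G Mod H) U' \<ge> alpha'_fun G U \<and>
         alpha''_fun (G Mod H) U' \<ge> alpha''_fun G U \<and>
         beta_fun (G Mod H) U' \<ge> beta_fun G U \<and>
         beta'_fun (G Mod H) U' \<ge> beta'_fun G U \<and>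
         beta''_fun (G Mod H) U' \<ge> beta''_fun G U"
proof -
  interpret comm_group G by fact
  have Hs: "H = torsion_subgroup G" by (simp add: H_def)
  have sub: "subgroup H G" using torsion_sub Hs by simp
  have carrQ: "carrier (G Mod H) = rcosets\<^bsub>G\<^esub> H" by (simp add: FactGroup_def)
  have "H #>\<^bsub>G\<^esub> \<one>\<^bsub>G\<^esub> = H" using coset_mult_one[OF subgroup.subset[OF sub]] .
  hence oneQ: "H \<in> rcosets\<^bsub>G\<^esub> H" using rcosetsI[OF subgroup.subset[OF sub] one_closed] by simp
  have U'c: "U' \<subseteq> rcosets\<^bsub>G\<^esub> H" unfolding U'_def using rcosetsI[OF subgroup.subset[OF sub]] assms(2) by blast
  have fU: "fin_ne (G Mod H) (insert H U')" unfolding fin_ne_def carrQ U'_def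
    using oneQ U'c assms(3) unfolding U'_def by auto
  have f1: "fin_ne (G Mod H) {H}" unfolding fin_ne_def carrQ using oneQ by auto
  note tr = transfer[OF Hs assms(3) assms(2)]
  have a1: "alpha_fun G U \<le> alpha_fun (G Mod H) U'"
    unfolding alpha_fun_def
  proof (rule inf_le)
    fix y assume "y \<in> {real (card (A <#>\<^bsub>G Mod H\<^esub> B)) / sqrt (real (card A) * real (card B)) | A B.
      fin_ne (G Mod H) A \<and> fin_ne (G Mod H) B \<and> U' \<subseteq> A \<and> U' \<subseteq> B}"
    then obtain A' B' where y: "y = real (card (A' <#>\<^bsub>G Mod H\<^esub> B')) / sqrt (real (card A') * real (card B'))"
      "fin_ne (G Mod H) A'" "fin_ne (G Mod H) B'" "U' \<subseteq> A'" "U' \<subseteq> B'" by blast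
    obtain A B k where k: "k > 0" "fin_ne G A" "fin_ne G B" "card A = k * card A'" "card B = k * card B'"
      "card (A <#>\<^bsub>G\<^esub> B) = k * card (A' <#>\<^bsub>G Mod H\<^esub> B')" "U' \<subseteq> A' \<longrightarrow> U \<subseteq> A" "U' \<subseteq> B' \<longrightarrow> U \<subseteq> B"
      using tr[OF y(2,3)] unfolding U'_def by blast
    have "real (card (A <#>\<^bsub>G\<^esub> B)) / sqrt (real (card A) * real (card B)) = y"
      unfolding y(1) k(4,5,6) using ratio_sqrt[OF k(1)] by simp
    thus "\<exists>x\<in>{real (card (A <#>\<^bsub>G\<^esub> B)) / sqrt (real (card A) * real (card B)) | A B.
      fin_ne G A \<and> fin_ne G B \<and> U \<subseteq> A \<and> U \<subseteq> B}. x \<le> y"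
      using k y by blast
  qed (use fU in \<open>blast, auto\<close>)
  have a2: "alpha'_fun G U \<le> alpha'_fun (G Mod H) U'"
    unfolding alpha'_fun_def
  proof (rule inf_le)
    fix y assume "y \<in> {real (card (A <#>\<^bsub>G Mod H\<^esub> B)) / real (card A) | A B.
      fin_ne (G Mod H) A \<and> fin_ne (G Mod H) B \<and> U' \<subseteq> A \<and> U' \<subseteq> B \<and> card A = card B}"
    then obtain A' B' where y: "y = real (card (A' <#>\<^bsub>G Mod H\<^esub> B')) / real (card A')"
      "fin_ne (G Mod H) A'" "fin_ne (G Mod H) B'" "U' \<subseteq> A'" "U' \<subseteq> B'" "card A' = card B'" by blast
    obtain A B k where k: "k > 0" "fin_ne G A" "fin_ne G B" "card A = k * card A'" "card B = k * card B'"
      "card (A <#>\<^bsub>G\<^esub> B) = k * card (A' <#>\<^bsub>G Mod H\<^esub> B')" "U' \<subseteq> A' \<longrightarrow> U \<subseteq> A" "U' \<subseteq> B' \<longrightarrow> U \<subseteq> B"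
      using tr[OF y(2,3)] unfolding U'_def by blast
    have "real (card (A <#>\<^bsub>G\<^esub> B)) / real (card A) = y"
      unfolding y(1) k(4,6) using ratio_lin[OF k(1)] by simp
    moreover have "card A = card B" using k y by simp
    ultimately show "\<exists>x\<in>{real (card (A <#>\<^bsub>G\<^esub> B)) / real (card A) | A B.
      fin_ne G A \<and> fin_ne G B \<and> U \<subseteq> A \<and> U \<subseteq> B \<and> card A = card B}. x \<le> y"
      using k y by blast
  qed (use fU in \<open>blast, auto\<close>)
  have a3: "alpha''_fun G U \<le> alpha''_fun (G Mod H) U'"
    unfolding alpha''_fun_def
  proof (rule inf_le)
    fix y assume "y \<in> {real (card (A <#>\<^bsub>G Mod H\<^esub> A)) / real (card A) | A.
      fin_ne (G Mod H) A \<and> U' \<subseteq> A}"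
    then obtain A' where y: "y = real (card (A' <#>\<^bsub>G Mod H\<^esub> A')) / real (card A')"
      "fin_ne (G Mod H) A'" "U' \<subseteq> A'" by blast
    obtain A B k where k: "k > 0" "fin_ne G A" "card A = k * card A'"
      "card (A <#>\<^bsub>G\<^esub> B) = k * card (A' <#>\<^bsub>G Mod H\<^esub> A')" "U' \<subseteq> A' \<longrightarrow> U \<subseteq> A" "A' = A' \<longrightarrow> A = B"
      using tr[OF y(2,2)] unfolding U'_def by blast
    have "real (card (A <#>\<^bsub>G\<^esub> A)) / real (card A) = y"
      using k unfolding y(1) using ratio_lin[OF k(1)] by simp
    thus "\<exists>x\<in>{real (card (A <#>\<^bsub>G\<^esub> A)) / real (card A) | A.
      fin_ne G A \<and> U \<subseteq> A}. x \<le> y"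
      using k y by blast
  qed (use fU in \<open>blast, auto\<close>)
  have b1: "beta_fun G U \<le> beta_fun (G Mod H) U'"
    unfolding beta_fun_def
  proof (rule inf_le)
    fix y assume "y \<in> {real (card ((A <#>\<^bsub>G Mod H\<^esub> B) <#>\<^bsub>G Mod H\<^esub> U')) / sqrt (real (card A) * real (card B)) | A B.
      fin_ne (G Mod H) A \<and> fin_ne (G Mod H) B}"
    then obtain A' B' where y: "y = real (card ((A' <#>\<^bsub>G Mod H\<^esub> B') <#>\<^bsub>G Mod H\<^esub> U')) / sqrt (real (card A') * real (card B'))"
      "fin_ne (G Mod H) A'" "fin_ne (G Mod H) B'" by blast
    obtain A B k where k: "k > 0" "fin_ne G A" "fin_ne G B" "card A = k * card A'" "card B = k * card B'"
      "card ((A <#>\<^bsub>G\<^esub> B) <#>\<^bsub>G\<^esub> U) = k * card ((A' <#>\<^bsub>G Mod H\<^esub> B') <#>\<^bsub>G Mod H\<^esub> U')"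
      using tr[OF y(2,3)] unfolding U'_def by blast
    have "real (card ((A <#>\<^bsub>G\<^esub> B) <#>\<^bsub>G\<^esub> U)) / sqrt (real (card A) * real (card B)) = y"
      unfolding y(1) k(4,5,6) using ratio_sqrt[OF k(1)] by simp
    thus "\<exists>x\<in>{real (card ((A <#>\<^bsub>G\<^esub> B) <#>\<^bsub>G\<^esub> U)) / sqrt (real (card A) * real (card B)) | A B.
      fin_ne G A \<and> fin_ne G B}. x \<le> y"
      using k y by blast
  qed (use f1 in \<open>blast, auto\<close>)
  have b2: "beta'_fun G U \<le> beta'_fun (G Mod H) U'"
    unfolding beta'_fun_def
  proof (rule inf_le)
    fix y assume "y \<in> {real (card ((A <#>\<^bsub>G Mod H\<^esub> B) <#>\<^bsub>G Mod H\<^esub> U')) / sqrt (real (card A) * real (card B)) | A B.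
      fin_ne (G Mod H) A \<and> fin_ne (G Mod H) B \<and> card A = card B}"
    then obtain A' B' where y: "y = real (card ((A' <#>\<^bsub>G Mod H\<^esub> B') <#>\<^bsub>G Mod H\<^esub> U')) / sqrt (real (card A') * real (card B'))"
      "fin_ne (G Mod H) A'" "fin_ne (G Mod H) B'" "card A' = card B'" by blast
    obtain A B k where k: "k > 0" "fin_ne G A" "fin_ne G B" "card A = k * card A'" "card B = k * card B'"
      "card ((A <#>\<^bsub>G\<^esub> B) <#>\<^bsub>G\<^esub> U) = k * card ((A' <#>\<^bsub>G Mod H\<^esub> B') <#>\<^bsub>G Mod H\<^esub> U')"
      using tr[OF y(2,3)] unfolding U'_def by blast
    have "real (card ((A <#>\<^bsub>G\<^esub> B) <#>\<^bsub>G\<^esub> U)) / sqrt (real (card A) * real (card B)) = y"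
      unfolding y(1) k(4,5,6) using ratio_sqrt[OF k(1)] by simp
    moreover have "card A = card B" using k y by simp
    ultimately show "\<exists>x\<in>{real (card ((A <#>\<^bsub>G\<^esub> B) <#>\<^bsub>G\<^esub> U)) / sqrt (real (card A) * real (card B)) | A B.
      fin_ne G A \<and> fin_ne G B \<and> card A = card B}. x \<le> y"
      using k y by blast
  qed (use f1 in \<open>blast, auto\<close>)
  have b3: "beta''_fun G U \<le> beta''_fun (G Mod H) U'"
    unfolding beta''_fun_def
  proof (rule inf_le)
    fix y assume "y \<in> {real (card ((A <#>\<^bsub>G Mod H\<^esub> A) <#>\<^bsub>G Mod H\<^esub> U')) / real (card A) | A.
      fin_ne (G Mod H) A}"
    then obtain A' where y: "y = real (card ((A' <#>\<^bsub>G Mod H\<^esub> A') <#>\<^bsub>G Mod H\<^esub> U')) / real (card A')"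
      "fin_ne (G Mod H) A'" by blast
    obtain A B k where k: "k > 0" "fin_ne G A" "card A = k * card A'"
      "card ((A <#>\<^bsub>G\<^esub> B) <#>\<^bsub>G\<^esub> U) = k * card ((A' <#>\<^bsub>G Mod H\<^esub> A') <#>\<^bsub>G Mod H\<^esub> U')" "A' = A' \<longrightarrow> A = B"
      using tr[OF y(2,2)] unfolding U'_def by blast
    have "real (card ((A <#>\<^bsub>G\<^esub> A) <#>\<^bsub>G\<^esub> U)) / real (card A) = y"
      using k unfolding y(1) using ratio_lin[OF k(1)] by simp
    thus "\<exists>x\<in>{real (card ((A <#>\<^bsub>G\<^esub> A) <#>\<^bsub>G\<^esub> U)) / real (card A) | A.
      fin_ne G A}. x \<le> y"
      using k y by blast
  qed (use f1 in \<open>blast, auto\<close>)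
  show ?thesis using a1 a2 a3 b1 b2 b3 by simp
qed

end
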